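(* Let $p\geqslant 3$ be a prime and let $g\geqslant 2$ be an integer. (1) Neither the dihedral group $\mathbb{D}_{p^2}$ of order $2p^2$ nor the group $\mathbb{Z}_p^2\rtimes\mathbb{Z}_2=\langle a,b,c\mid a^p=b^p=c^2=1,\ cac=a^{-1},\ cbc=b^{-1},\ [a,b]=1\rangle$ acts triangularly on a compact Riemann surface of genus $g$. (2) If $\mathbb{Z}_{2p}\times\mathbb{Z}_p$ acts triangularly on a compact Riemann surface of genus $g$, then the signature of the action is $(2p,2p,p)$. (3) If $\mathbb{D}_p\times\mathbb{Z}_p$ acts triangularly on a compact Riemann surface of genus $g$, then the signature of the action is $(2p,2p,p)$ or $(2,p,2p)$. (4) If the cyclic group $\mathbb{Z}_{2p^2}$ acts triangularly on a compact Riemann surface of genus $g$, then the signature of the action is one of $(2,p^2,2p^2)$, $(2p^2,2p^2,p)$, $(2p^2,2p^2,p^2)$, $(2p,p^2,2p^2)$.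
   Context: All groups act faithfully by conformal automorphisms on compact Riemann surfaces. $\mathbb{Z}_n$ denotes the cyclic group of order $n$ and $\mathbb{D}_n$ the dihedral group of order $2n$. A finite group $G$ acting on a compact Riemann surface $S$ acts with signature $(h;m_1,\dots,m_r)$ if $S/G$ has genus $h$ and the branched regular covering $S\to S/G$ ramifies over exactly $r$ points, the points in the fibre over the $i$-th of which have $G$-stabiliser of order $m_i\ge 2$. The action is called triangular if $h=0$ and $r=3$; the signature is then written $(m_1,m_2,m_3)$ (up to the order of the $m_i$). Equivalently, $G$ acts with signature $(m_1,m_2,m_3)$ iff there is a surface-kernel epimorphism (ske) $\Phi:\Gamma\to G$, i.e. an epimorphism injective on each finite cyclic subgroup, from the triangle group $\Gamma=\langle x_1,x_2,x_3\mid x_1x_2x_3=x_1^{m_1}=x_2^{m_2}=x_3^{m_3}=1\rangle$, with $S\cong\mathbb{H}/\ker\Phi$. *)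

theory Defs
  imports "HOL-Algebra.Algebra" "HOL-Library.Multiset"
begin

text \<open>Triangular action of a finite group G on a compact Riemann surface of genus g
 with signature M = {#m1,m2,m3#}: equivalently (surface-kernel epimorphism from the
 triangle group (m1,m2,m3)) a generating triple x1,x2,x3 of G with x1 x2 x3 = 1 and
 ord xi = mi >= 2, the genus being given by the Riemann--Hurwitz formula
 2g - 2 = |G| (1 - 1/m1 - 1/m2 - 1/m3).\<close>

definition acts_triangularly :: "('a, 'b) monoid_scheme \<Rightarrow> nat \<Rightarrow> nat multiset \<Rightarrow> bool" where
  "acts_triangularly G g M \<longleftrightarrow> group G \<and> finite (carrier G) \<and>
     (\<exists>x1 x2 x3 m1 m2 m3.
        x1 \<in> carrier G \<and> x2 \<in> carrier G \<and> x3 \<in> carrier G \<and>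
        generate G {x1, x2, x3} = carrier G \<and>
        x1 \<otimes>\<^bsub>G\<^esub> x2 \<otimes>\<^bsub>G\<^esub> x3 = \<one>\<^bsub>G\<^esub> \<and>
        group.ord G x1 = m1 \<and> group.ord G x2 = m2 \<and> group.ord G x3 = m3 \<and>
        m1 \<ge> 2 \<and> m2 \<ge> 2 \<and> m3 \<ge> 2 \<and>
        M = {#m1, m2, m3#} \<and>
        2 * real g - 2 = real (order G) * (1 - 1 / real m1 - 1 / real m2 - 1 / real m3))"

text \<open>Dihedral group D_n of order 2n: pairs (k, s) standing for r^k t^s,
 with t r t = r^-1.\<close>
definition dihedral_group :: "nat \<Rightarrow> (int \<times> int) monoid" where
  "dihedral_group n = \<lparr>carrier = {0..<int n} \<times> {0..<2},
     monoid.mult = (\<lambda>(a, s) (b, t). ((a + (if s = 0 then b else - b)) mod int n, (s + t) mod 2)),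
     one = (0, 0)\<rparr>"

text \<open>Z_p^2 \<rtimes> Z_2 = <a,b,c | a^p=b^p=c^2=1, cac=a^-1, cbc=b^-1, [a,b]=1>:
 ((i, j), s) stands for a^i b^j c^s.\<close>
definition Zp2_semidir_Z2 :: "nat \<Rightarrow> ((int \<times> int) \<times> int) monoid" where
  "Zp2_semidir_Z2 p = \<lparr>carrier = ({0..<int p} \<times> {0..<int p}) \<times> {0..<2},
     monoid.mult = (\<lambda>((a1, a2), s) ((b1, b2), t).
        (((a1 + (if s = 0 then b1 else - b1)) mod int p,
          (a2 + (if s = 0 then b2 else - b2)) mod int p), (s + t) mod 2)),
     one = ((0, 0), 0)\<rparr>"

end

theory Submission
  imports Defs
begin


definition homm :: "('a,'b) monoid_scheme \<Rightarrow> ('a \<Rightarrow> int) \<Rightarrow> int \<Rightarrow> bool" where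
  "homm G f n \<longleftrightarrow> (\<forall>x\<in>carrier G. \<forall>y\<in>carrier G. f (x \<otimes>\<^bsub>G\<^esub> y) mod n = (f x + f y) mod n)"

lemma hommD: "homm G f n \<Longrightarrow> x \<in> carrier G \<Longrightarrow> y \<in> carrier G \<Longrightarrow> f (x \<otimes>\<^bsub>G\<^esub> y) mod n = (f x + f y) mod n"
  unfolding homm_def by blast

lemma homm_one:
  fixes G (structure)
  assumes "group G" "homm G f n" shows "f \<one> mod n = 0"
proof -
  interpret group G by fact
  have "f (\<one> \<otimes> \<one>) mod n = (f \<one> + f \<one>) mod n" using hommD[OF assms(2), of \<one> \<one>] by simp
  hence "f \<one> mod n = (f \<one> + f \<one>) mod n" by simp
  hence "n dvd f \<one> - (f \<one> + f \<one>)" by (rule mod_eq_dvd_iff[THEN iffD1])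
  hence "n dvd f \<one>" by (simp add: dvd_minus_iff)
  thus ?thesis by (simp add: dvd_eq_mod_eq_0)
qed

lemma homm_pow:
  fixes G (structure)
  assumes "group G" "homm G f n" "x \<in> carrier G" shows "f (x [^] (k::nat)) mod n = (int k * f x) mod n"
proof (induction k)
  case 0 then show ?case using homm_one[OF assms(1,2)] by simp
next
  case (Suc k)
  interpret group G by fact
  have "f (x [^] Suc k) mod n = (f (x[^]k) + f x) mod n" using hommD[OF assms(2)] assms(3) by simp
  also have "\<dots> = ((f (x[^]k)) mod n + f x) mod n" by (simp add: mod_simps)
  also have "\<dots> = (int k * f x + f x) mod n" using Suc by (simp add: mod_simps)
  finally show ?case by (simp add: algebra_simps)
qed

lemma homm_inv:
  fixes G (structure)
  assumes "group G" "homm G f n" "x \<in> carrier G" shows "f (inv x) mod n = (- f x) mod n"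
proof -
  interpret group G by fact
  have "f (x \<otimes> inv x) mod n = (f x + f (inv x)) mod n" using hommD[OF assms(2), of x "inv x"] assms(3) by simp
  hence "(f x + f (inv x)) mod n = 0" using assms homm_one[OF assms(1,2)] by simp
  hence "n dvd f (inv x) - (- f x)" by (simp add: dvd_eq_mod_eq_0 add.commute)
  thus ?thesis by (rule mod_eq_dvd_iff[THEN iffD2])
qed

lemma homm_gen:
  fixes G (structure)
  assumes "group G" "homm G f n" "S \<subseteq> carrier G" "\<forall>s\<in>S. f s mod n = 0" "y \<in> generate G S"
  shows "f y mod n = 0"
  using assms(5)
proof (induction rule: generate.induct)
  case one then show ?case using homm_one[OF assms(1,2)] .
next
  case (incl h) then show ?case using assms by auto
next
  case (inv h)
  then have "h \<in> carrier G" "f h mod n = 0" using assms by auto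
  then have "f (inv h) mod n = (- f h) mod n" using homm_inv[OF assms(1,2), of h] by simp
  moreover have "(- f h) mod n = (- (f h mod n)) mod n" by (rule mod_minus_eq[symmetric])
  ultimately show ?case using \<open>f h mod n = 0\<close> by simp
next
  case (eng h1 h2)
  interpret group G by fact
  have "h1 \<in> carrier G" "h2 \<in> carrier G" using eng generate_incl assms(3) by blast+
  then have "f (h1 \<otimes> h2) mod n = (f h1 + f h2) mod n" using hommD[OF assms(2)] by blast
  also have "\<dots> = (f h1 mod n + f h2 mod n) mod n" by (simp add: mod_simps)
  finally show ?case using eng by simp
qed

lemma homm_triple:
  fixes G (structure)
  assumes "group G" "homm G f n" "x1 \<in> carrier G" "x2 \<in> carrier G" "x3 \<in> carrier G"
    "x1 \<otimes> x2 \<otimes> x3 = \<one>"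
  shows "(f x1 + f x2 + f x3) mod n = 0"
proof -
  interpret group G by fact
  have "f ((x1 \<otimes> x2) \<otimes> x3) mod n = (f (x1 \<otimes> x2) + f x3) mod n"
    using hommD[OF assms(2)] assms(3-5) by blast
  also have "\<dots> = ((f (x1 \<otimes> x2)) mod n + f x3) mod n" by (simp add: mod_simps)
  also have "\<dots> = ((f x1 + f x2) mod n + f x3) mod n" using hommD[OF assms(2)] assms(3-5) by simp
  also have "\<dots> = (f x1 + f x2 + f x3) mod n" by (simp add: mod_simps)
  finally show ?thesis using assms(6) homm_one[OF assms(1,2)] by simp
qed

lemma homm_ord:
  fixes G (structure)
  assumes "group G" "homm G f n" "x \<in> carrier G" shows "(int (group.ord G x) * f x) mod n = 0"
proof -
  interpret group G by fact
  have "x [^] ord x = \<one>" using pow_eq_id[OF assms(3)] by simp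
  hence "f (x [^] ord x) mod n = 0" using homm_one[OF assms(1,2)] by simp
  thus ?thesis using homm_pow[OF assms] by simp
qed

lemma pow_DirProd:
  "x [^]\<^bsub>G \<times>\<times> H\<^esub> (n::nat) = (fst x [^]\<^bsub>G\<^esub> n, snd x [^]\<^bsub>H\<^esub> n)"
proof (induction n)
  case 0 then show ?case by simp
next
  case (Suc n) then show ?case by (simp add: mult_DirProd')
qed

lemma ord_dvd_iff: "group G \<Longrightarrow> x \<in> carrier G \<Longrightarrow> group.ord G x dvd n \<longleftrightarrow> x [^]\<^bsub>G\<^esub> n = \<one>\<^bsub>G\<^esub>"
  using group.pow_eq_id by metis


definition triple :: "('a,'b) monoid_scheme \<Rightarrow> nat \<Rightarrow> 'a \<Rightarrow> 'a \<Rightarrow> 'a \<Rightarrow> bool" where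
  "triple G g x1 x2 x3 \<longleftrightarrow> x1 \<in> carrier G \<and> x2 \<in> carrier G \<and> x3 \<in> carrier G \<and>
     generate G {x1, x2, x3} = carrier G \<and>
     (\<forall>h n. homm G h n \<longrightarrow> (h x1 + h x2 + h x3) mod n = 0) \<and>
     group.ord G x1 \<ge> 2 \<and> group.ord G x2 \<ge> 2 \<and> group.ord G x3 \<ge> 2 \<and>
     2 * real g - 2 = real (order G) * (1 - 1 / real (group.ord G x1) - 1 / real (group.ord G x2) - 1 / real (group.ord G x3))"

lemma triple_carrier: "triple G g x1 x2 x3 \<Longrightarrow> x1 \<in> carrier G \<and> x2 \<in> carrier G \<and> x3 \<in> carrier G"
  unfolding triple_def by (elim conjE) (intro conjI)

lemma triple_hom: "triple G g x1 x2 x3 \<Longrightarrow> homm G h n \<Longrightarrow> (h x1 + h x2 + h x3) mod n = 0"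
  unfolding triple_def by (elim conjE allE impE)

lemma triple_gen: "triple G g x1 x2 x3 \<Longrightarrow> generate G {x1, x2, x3} = carrier G"
  unfolding triple_def by (elim conjE)

lemma triple_ord: "triple G g x1 x2 x3 \<Longrightarrow> group.ord G x1 \<ge> 2 \<and> group.ord G x2 \<ge> 2 \<and> group.ord G x3 \<ge> 2"
  unfolding triple_def by (elim conjE) (intro conjI)

lemma triple_rh: "triple G g x1 x2 x3 \<Longrightarrow> 2 * real g - 2 = real (order G) * (1 - 1 / real (group.ord G x1) - 1 / real (group.ord G x2) - 1 / real (group.ord G x3))"
  unfolding triple_def by (elim conjE)

lemma triple_swap12: "triple G g x1 x2 x3 \<Longrightarrow> triple G g x2 x1 x3"
  unfolding triple_def
  apply (intro conjI)
  apply simp_all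
  apply (simp add: insert_commute)
  apply (simp add: add.commute add.left_commute)
  done

lemma triple_swap23: "triple G g x1 x2 x3 \<Longrightarrow> triple G g x1 x3 x2"
  unfolding triple_def
  apply (intro conjI)
  apply simp_all
  apply (simp add: insert_commute)
  apply (simp add: add.commute add.left_commute)
  done

lemma acts_triple:
  assumes "acts_triangularly G g M"
  shows "group G \<and> (\<exists>x1 x2 x3. triple G g x1 x2 x3 \<and> M = {#group.ord G x1, group.ord G x2, group.ord G x3#})"
proof -
  have grp: "group G" using assms unfolding acts_triangularly_def by simp
  have E: "\<exists>x1 x2 x3 m1 m2 m3. x1 \<in> carrier G \<and> x2 \<in> carrier G \<and> x3 \<in> carrier G \<and>
        generate G {x1, x2, x3} = carrier G \<and>
        x1 \<otimes>\<^bsub>G\<^esub> x2 \<otimes>\<^bsub>G\<^esub> x3 = \<one>\<^bsub>G\<^esub> \<and>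
        group.ord G x1 = m1 \<and> group.ord G x2 = m2 \<and> group.ord G x3 = m3 \<and>
        m1 \<ge> 2 \<and> m2 \<ge> 2 \<and> m3 \<ge> 2 \<and>
        M = {#m1, m2, m3#} \<and>
        2 * real g - 2 = real (order G) * (1 - 1 / real m1 - 1 / real m2 - 1 / real m3)"
    using assms unfolding acts_triangularly_def by (elim conjE) assumption
  from E obtain x1 x2 x3 m1 m2 m3 where H: "x1 \<in> carrier G \<and> x2 \<in> carrier G \<and> x3 \<in> carrier G \<and>
        generate G {x1, x2, x3} = carrier G \<and>
        x1 \<otimes>\<^bsub>G\<^esub> x2 \<otimes>\<^bsub>G\<^esub> x3 = \<one>\<^bsub>G\<^esub> \<and>
        group.ord G x1 = m1 \<and> group.ord G x2 = m2 \<and> group.ord G x3 = m3 \<and>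
        m1 \<ge> 2 \<and> m2 \<ge> 2 \<and> m3 \<ge> 2 \<and>
        M = {#m1, m2, m3#} \<and>
        2 * real g - 2 = real (order G) * (1 - 1 / real m1 - 1 / real m2 - 1 / real m3)"
    by (elim exE) (rule that, assumption)
  have xs: "x1 \<in> carrier G" "x2 \<in> carrier G" "x3 \<in> carrier G" using H by blast+
  have prod: "x1 \<otimes>\<^bsub>G\<^esub> x2 \<otimes>\<^bsub>G\<^esub> x3 = \<one>\<^bsub>G\<^esub>" using H by blast
  have hs: "\<forall>h n. homm G h n \<longrightarrow> (h x1 + h x2 + h x3) mod n = 0"
    using homm_triple[OF grp _ xs prod] by blast
  have "triple G g x1 x2 x3" unfolding triple_def using H hs by simp
  moreover have "M = {#group.ord G x1, group.ord G x2, group.ord G x3#}" using H by simp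
  ultimately show ?thesis using grp by blast
qed

lemma triple_gen_kernel:
  assumes "group G" "triple G g x1 x2 x3" "homm G f n" "f x1 mod n = 0" "f x2 mod n = 0" "f x3 mod n = 0"
    "w \<in> carrier G"
  shows "f w mod n = 0"
  using homm_gen[OF assms(1,3), of "{x1,x2,x3}" w] assms triple_gen[OF assms(2)] triple_carrier[OF assms(2)] by auto

lemma parity_wlog:
  assumes grp: "group G" and hom: "homm G f 2" and vals: "\<forall>x\<in>carrier G. f x = 0 \<or> f x = 1"
    and w: "w \<in> carrier G" "f w = 1" and tr: "triple G g x1 x2 x3"
  shows "\<exists>y1 y2 y3. triple G g y1 y2 y3 \<and>
     {#group.ord G y1, group.ord G y2, group.ord G y3#} = {#group.ord G x1, group.ord G x2, group.ord G x3#}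
     \<and> f y1 = 1 \<and> f y2 = 1 \<and> f y3 = 0"
proof -
  have xs: "x1 \<in> carrier G" "x2 \<in> carrier G" "x3 \<in> carrier G" using triple_carrier[OF tr] by auto
  have sum: "(f x1 + f x2 + f x3) mod 2 = 0" using triple_hom[OF tr hom] .
  have not0: "\<not> (f x1 = 0 \<and> f x2 = 0 \<and> f x3 = 0)"
  proof
    assume "f x1 = 0 \<and> f x2 = 0 \<and> f x3 = 0"
    hence "f w mod 2 = 0" using triple_gen_kernel[OF grp tr hom _ _ _ w(1)] by simp
    thus False using w by simp
  qed
  have c: "f x1 = 1 \<and> f x2 = 1 \<and> f x3 = 0 \<or> f x1 = 1 \<and> f x3 = 1 \<and> f x2 = 0 \<or> f x2 = 1 \<and> f x3 = 1 \<and> f x1 = 0"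
  proof -
    have "f x1 = 0 \<or> f x1 = 1" "f x2 = 0 \<or> f x2 = 1" "f x3 = 0 \<or> f x3 = 1" using vals xs by auto
    thus ?thesis using sum not0 by (elim disjE) auto
  qed
  have t2: "triple G g x1 x3 x2" using triple_swap23[OF tr] .
  have t3: "triple G g x2 x3 x1" using triple_swap23[OF triple_swap12[OF tr]] .
  have m2: "{#group.ord G x1, group.ord G x3, group.ord G x2#} = {#group.ord G x1, group.ord G x2, group.ord G x3#}"
    by (simp add: add_mset_commute)
  have m3: "{#group.ord G x2, group.ord G x3, group.ord G x1#} = {#group.ord G x1, group.ord G x2, group.ord G x3#}"
    by (simp add: add_mset_commute)
  from c show ?thesis
  proof (elim disjE)
    assume h: "f x1 = 1 \<and> f x2 = 1 \<and> f x3 = 0"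
    show ?thesis by (rule exI[where x=x1], rule exI[where x=x2], rule exI[where x=x3]) (use tr h in simp)
  next
    assume h: "f x1 = 1 \<and> f x3 = 1 \<and> f x2 = 0"
    show ?thesis by (rule exI[where x=x1], rule exI[where x=x3], rule exI[where x=x2]) (use t2 h m2 in simp)
  next
    assume h: "f x2 = 1 \<and> f x3 = 1 \<and> f x1 = 0"
    show ?thesis by (rule exI[where x=x2], rule exI[where x=x3], rule exI[where x=x1]) (use t3 h m3 in simp)
  qed
qed


lemma rh_two2:
  fixes a b c N g :: nat
  assumes "2 * real g - 2 = real N * (1 - 1 / real a - 1 / real b - 1 / real c)"
    "a = 2 \<and> b = 2 \<or> a = 2 \<and> c = 2 \<or> b = 2 \<and> c = 2" "a > 0" "b > 0" "c > 0" "g \<ge> 2"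
  shows False
proof -
  have "real N * (1 - 1 / real a - 1 / real b - 1 / real c) \<le> 0"
    using assms(2-5) by (auto intro!: mult_nonneg_nonpos)
  moreover have "2 * real g - 2 \<ge> 2" using assms(6) by simp
  ultimately show False using assms(1) by linarith
qed

lemma ord_eq_2:
  fixes G (structure)
  assumes "group G" "x \<in> carrier G" "x \<otimes> x = \<one>" "x \<noteq> \<one>"
  shows "group.ord G x = 2"
proof -
  interpret group G by fact
  have "x [^] (2::nat) = \<one>" using assms by (simp add: numeral_2_eq_2)
  hence "ord x dvd 2" using pow_eq_id[OF assms(2)] by simp
  moreover have "ord x \<noteq> 1" using ord_eq_1[OF assms(2)] assms(4) by simp
  ultimately show ?thesis using dvd_imp_le[of "ord x" 2] by (cases "ord x") (auto simp: less_Suc_eq_0_disj dest: dvd_imp_le)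
qed

lemma no_tri_refl:
  fixes G (structure)
  assumes hom: "homm G f 2" and vals: "\<forall>x\<in>carrier G. f x = 0 \<or> f x = 1"
    and inv: "\<forall>x\<in>carrier G. f x = 1 \<longrightarrow> x \<otimes> x = \<one> \<and> x \<noteq> \<one>"
    and w: "w \<in> carrier G" "f w = 1" and g: "g \<ge> 2"
  shows "\<not> acts_triangularly G g M"
proof
  assume a: "acts_triangularly G g M"
  have A: "group G \<and> (\<exists>x1 x2 x3. triple G g x1 x2 x3 \<and> M = {#group.ord G x1, group.ord G x2, group.ord G x3#})"
    by (rule acts_triple[OF a])
  have grp: "group G" using A by (rule conjunct1)
  obtain x1 x2 x3 where tr: "triple G g x1 x2 x3" using A by (elim conjE exE)
  obtain y1 y2 y3 where tr2: "triple G g y1 y2 y3" and f: "f y1 = 1" "f y2 = 1"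
    using parity_wlog[OF grp hom vals w tr] by (elim conjE exE)
  have ys: "y1 \<in> carrier G" "y2 \<in> carrier G" "y3 \<in> carrier G" using triple_carrier[OF tr2] by auto
  have "y1 \<otimes> y1 = \<one> \<and> y1 \<noteq> \<one>" using inv ys f by simp
  hence o1: "group.ord G y1 = 2" using ord_eq_2[OF grp ys(1)] by simp
  have "y2 \<otimes> y2 = \<one> \<and> y2 \<noteq> \<one>" using inv ys f by simp
  hence o2: "group.ord G y2 = 2" using ord_eq_2[OF grp ys(2)] by simp
  have o3: "group.ord G y3 > 0" using triple_ord[OF tr2] by simp
  show False
    by (rule rh_two2[OF triple_rh[OF tr2] _ _ _ _ g]) (use o1 o2 o3 in simp_all)
qed

lemma homm_dihedral: "homm (dihedral_group n) snd 2"
  unfolding homm_def dihedral_group_def by (auto simp: mod_simps)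

lemma dihedral_refl:
  assumes "n > 0"
  shows "\<forall>x\<in>carrier (dihedral_group n). snd x = 1 \<longrightarrow>
      x \<otimes>\<^bsub>dihedral_group n\<^esub> x = \<one>\<^bsub>dihedral_group n\<^esub> \<and> x \<noteq> \<one>\<^bsub>dihedral_group n\<^esub>"
  unfolding dihedral_group_def by auto

lemma part1a:
  assumes "n > 0" "g \<ge> 2" shows "\<not> acts_triangularly (dihedral_group n) g M"
  apply (rule no_tri_refl[OF homm_dihedral _ dihedral_refl[OF assms(1)], of "(0,1)"])
  using assms by (auto simp: dihedral_group_def)

lemma homm_Zp2: "homm (Zp2_semidir_Z2 n) snd 2"
  unfolding homm_def Zp2_semidir_Z2_def by (auto simp: mod_simps)

lemma part1b:
  assumes "n > 0" "g \<ge> 2" shows "\<not> acts_triangularly (Zp2_semidir_Z2 n) g M"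
  apply (rule no_tri_refl[OF homm_Zp2, of _ "((0,0),1)"])
  using assms by (auto simp: Zp2_semidir_Z2_def)


lemma dih_mult: "u \<otimes>\<^bsub>dihedral_group n\<^esub> v =
   ((fst u + (if snd u = 0 then fst v else - fst v)) mod int n, (snd u + snd v) mod 2)"
  by (cases u; cases v) (simp add: dihedral_group_def)

lemma dih_one: "\<one>\<^bsub>dihedral_group n\<^esub> = (0, 0)"
  by (simp add: dihedral_group_def)

lemma dih_carrier: "carrier (dihedral_group n) = {0..<int n} \<times> {0..<2}"
  by (simp add: dihedral_group_def)

lemma dih_rot_pow:
  assumes "0 \<le> k" "k < int n"
  shows "(k, 0) [^]\<^bsub>dihedral_group n\<^esub> (m::nat) = ((int m * k) mod int n, 0)"
proof (induction m)
  case 0 then show ?case by (simp add: dih_one)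
next
  case (Suc m)
  have "(k, 0) [^]\<^bsub>dihedral_group n\<^esub> Suc m = ((int m * k) mod int n, 0) \<otimes>\<^bsub>dihedral_group n\<^esub> (k, 0)"
    using Suc by simp
  also have "\<dots> = ((int m * k mod int n + k) mod int n, 0)" by (simp add: dih_mult)
  also have "\<dots> = ((int (Suc m) * k) mod int n, 0)" by (simp add: mod_simps algebra_simps)
  finally show ?case .
qed

lemma dih_refl_pow:
  assumes "0 \<le> k" "k < int n"
  shows "(k, 1) [^]\<^bsub>dihedral_group n\<^esub> (2 * (m::nat)) = (0, 0)"
proof (induction m)
  case 0 then show ?case by (simp add: dih_one)
next
  case (Suc m)
  have e: "2 * Suc m = Suc (Suc (2 * m))" by simp
  have "(k, 1) [^]\<^bsub>dihedral_group n\<^esub> (2 * Suc m) = ((0, 0) \<otimes>\<^bsub>dihedral_group n\<^esub> (k, 1)) \<otimes>\<^bsub>dihedral_group n\<^esub> (k, 1)"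
    unfolding e using Suc by simp
  also have "\<dots> = (0, 0)" using assms by (simp add: dih_mult)
  finally show ?case .
qed

abbreviation "G3 p \<equiv> dihedral_group p \<times>\<times> integer_mod_group p"

lemma G3_carrier: "p > 0 \<Longrightarrow> carrier (G3 p) = ({0..<int p} \<times> {0..<2}) \<times> {0..<int p}"
  by (simp add: dih_carrier carrier_integer_mod_group)

lemma homm_G3: "homm (G3 p) (\<lambda>x. snd (fst x)) 2"
  unfolding homm_def by (auto simp: mult_DirProd' dih_mult mod_simps)

lemma G3_pow:
  assumes "p > 0" "x \<in> carrier (G3 p)"
  shows "snd (fst x) = 0 \<Longrightarrow> x [^]\<^bsub>G3 p\<^esub> p = \<one>\<^bsub>G3 p\<^esub>"
    and "snd (fst x) = 1 \<Longrightarrow> x [^]\<^bsub>G3 p\<^esub> (2 * p) = \<one>\<^bsub>G3 p\<^esub>"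
proof -
  obtain k s c where x: "x = ((k, s), c)" by (metis prod.collapse)
  have r: "0 \<le> k" "k < int p" "0 \<le> c" "c < int p" using assms by (auto simp: dih_carrier carrier_integer_mod_group x)
  show "snd (fst x) = 0 \<Longrightarrow> x [^]\<^bsub>G3 p\<^esub> p = \<one>\<^bsub>G3 p\<^esub>"
    using dih_rot_pow[OF r(1,2), of p] by (simp add: x pow_DirProd dih_one)
  show "snd (fst x) = 1 \<Longrightarrow> x [^]\<^bsub>G3 p\<^esub> (2 * p) = \<one>\<^bsub>G3 p\<^esub>"
    using dih_refl_pow[OF r(1,2), of p] by (simp add: x pow_DirProd dih_one)
qed

lemma dvd_prime_cases:
  fixes d p :: nat
  assumes "Factorial_Ring.prime p" "d dvd p" "d \<ge> 2" shows "d = p"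
proof -
  have "d = 1 \<or> d = p" using assms(1,2) prime_nat_iff by blast
  thus ?thesis using assms(3) by auto
qed

lemma dvd_2p_even:
  fixes d p :: nat
  assumes "Factorial_Ring.prime p" "d dvd 2 * p" "even d" shows "d = 2 \<or> d = 2 * p"
proof -
  obtain e where e: "d = 2 * e" using assms(3) by blast
  have "e dvd p" using assms(2) e by simp
  hence "e = 1 \<or> e = p" using assms(1) prime_nat_iff by blast
  thus ?thesis using e by auto
qed

lemma G3_ord:
  assumes "Factorial_Ring.prime p" "group (G3 p)" "x \<in> carrier (G3 p)" "group.ord (G3 p) x \<ge> 2"
  shows "snd (fst x) = 0 \<Longrightarrow> group.ord (G3 p) x = p"
    and "snd (fst x) = 1 \<Longrightarrow> group.ord (G3 p) x = 2 \<or> group.ord (G3 p) x = 2 * p"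
proof -
  have p0: "p > 0" using assms(1) prime_gt_0_nat by blast
  show "snd (fst x) = 0 \<Longrightarrow> group.ord (G3 p) x = p"
  proof -
    assume "snd (fst x) = 0"
    hence "group.ord (G3 p) x dvd p" using G3_pow(1)[OF p0 assms(3)] ord_dvd_iff[OF assms(2,3)] by simp
    thus ?thesis using dvd_prime_cases[OF assms(1) _ assms(4)] by simp
  qed
  show "snd (fst x) = 1 \<Longrightarrow> group.ord (G3 p) x = 2 \<or> group.ord (G3 p) x = 2 * p"
  proof -
    assume s: "snd (fst x) = 1"
    hence "group.ord (G3 p) x dvd 2 * p" using G3_pow(2)[OF p0 assms(3)] ord_dvd_iff[OF assms(2,3)] by simp
    moreover have "(int (group.ord (G3 p) x) * snd (fst x)) mod 2 = 0"
      using homm_ord[OF assms(2) homm_G3 assms(3)] by simp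
    hence "even (group.ord (G3 p) x)" using s by presburger
    ultimately show ?thesis using dvd_2p_even[OF assms(1)] by blast
  qed
qed

lemma part3:
  assumes "Factorial_Ring.prime p" "p \<ge> 3" "g \<ge> 2" "acts_triangularly (G3 p) g M"
  shows "M = {#2 * p, 2 * p, p#} \<or> M = {#2, p, 2 * p#}"
proof -
  have p0: "p > 0" using assms(2) by simp
  have A: "group (G3 p) \<and> (\<exists>x1 x2 x3. triple (G3 p) g x1 x2 x3 \<and> M = {#group.ord (G3 p) x1, group.ord (G3 p) x2, group.ord (G3 p) x3#})"
    by (rule acts_triple[OF assms(4)])
  have grp: "group (G3 p)" using A by (rule conjunct1)
  obtain x1 x2 x3 where tr: "triple (G3 p) g x1 x2 x3"
    and M: "M = {#group.ord (G3 p) x1, group.ord (G3 p) x2, group.ord (G3 p) x3#}" using A by (elim conjE exE)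
  have vals: "\<forall>x\<in>carrier (G3 p). snd (fst x) = 0 \<or> snd (fst x) = 1" using p0 by (auto simp: dih_carrier carrier_integer_mod_group)
  have w: "((0, 1), 0) \<in> carrier (G3 p)" "snd (fst ((0::int, 1::int), 0::int)) = 1" using p0 by (auto simp: dih_carrier carrier_integer_mod_group)
  obtain y1 y2 y3 where tr2: "triple (G3 p) g y1 y2 y3" and f: "snd (fst y1) = 1" "snd (fst y2) = 1" "snd (fst y3) = 0"
    and M2: "{#group.ord (G3 p) y1, group.ord (G3 p) y2, group.ord (G3 p) y3#} = {#group.ord (G3 p) x1, group.ord (G3 p) x2, group.ord (G3 p) x3#}"
    using parity_wlog[OF grp homm_G3 vals w tr] by (elim conjE exE)
  have ys: "y1 \<in> carrier (G3 p)" "y2 \<in> carrier (G3 p)" "y3 \<in> carrier (G3 p)" using triple_carrier[OF tr2] by auto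
  have os: "group.ord (G3 p) y1 \<ge> 2" "group.ord (G3 p) y2 \<ge> 2" "group.ord (G3 p) y3 \<ge> 2" using triple_ord[OF tr2] by auto
  have o3: "group.ord (G3 p) y3 = p" using G3_ord(1)[OF assms(1) grp ys(3) os(3) f(3)] .
  have o1: "group.ord (G3 p) y1 = 2 \<or> group.ord (G3 p) y1 = 2 * p" using G3_ord(2)[OF assms(1) grp ys(1) os(1) f(1)] .
  have o2: "group.ord (G3 p) y2 = 2 \<or> group.ord (G3 p) y2 = 2 * p" using G3_ord(2)[OF assms(1) grp ys(2) os(2) f(2)] .
  have n22: "\<not> (group.ord (G3 p) y1 = 2 \<and> group.ord (G3 p) y2 = 2)"
  proof
    assume h: "group.ord (G3 p) y1 = 2 \<and> group.ord (G3 p) y2 = 2"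
    show False
      by (rule rh_two2[OF triple_rh[OF tr2] _ _ _ _ assms(3)]) (use h os in simp_all)
  qed
  have MM: "M = {#group.ord (G3 p) y1, group.ord (G3 p) y2, group.ord (G3 p) y3#}" using M M2 by simp
  show ?thesis using o1 o2 n22 unfolding MM o3
    by (elim disjE) (simp_all add: add_mset_commute)
qed


lemma int_mult_small:
  fixes x p k :: int
  assumes "x = p * k" "0 \<le> x" "x < 2 * p" "p > 0"
  shows "k = 0 \<or> k = 1"
proof -
  have "k \<ge> 0" using assms by (metis mult_less_0_iff not_less)
  moreover have "k < 2" using assms by (metis mult_less_cancel_left_pos mult.commute)
  ultimately show ?thesis by auto
qed

lemma two_b_mod:
  fixes b p :: int
  assumes "0 \<le> b" "b < p" "(2 * b) mod p = 0" "odd p"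
  shows "b = 0"
proof -
  have p: "p > 0" using assms by simp
  obtain k where k: "2 * b = p * k" using assms(3) by (metis dvd_def mod_0_imp_dvd)
  have "k = 0 \<or> k = 1" using int_mult_small[OF k] assms p by simp
  thus ?thesis using k assms(4) by auto
qed

lemma two_a_mod:
  fixes a p :: int
  assumes "0 \<le> a" "a < 2 * p" "(2 * a) mod (2 * p) = 0"
  shows "a = 0 \<or> a = p"
proof -
  have p: "p > 0" using assms by simp
  obtain k where k: "2 * a = (2 * p) * k" using assms(3) by (metis dvd_def mod_0_imp_dvd)
  hence k2: "a = p * k" by simp
  have "k = 0 \<or> k = 1" using int_mult_small[OF k2] assms p by simp
  thus ?thesis using k2 by auto
qed

lemma u_mod:
  fixes u p :: int
  assumes "0 \<le> u" "u < 2 * p" "u mod p = 0"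
  shows "u = 0 \<or> u = p"
proof -
  have p: "p > 0" using assms by simp
  obtain k where k: "u = p * k" using assms(3) by (metis dvd_def mod_0_imp_dvd)
  have "k = 0 \<or> k = 1" using int_mult_small[OF k] assms p by simp
  thus ?thesis using k by auto
qed

lemma neg_mod_nz:
  fixes v p :: int
  assumes "0 < v" "v < p"
  shows "(- v) mod p \<noteq> 0"
proof -
  have "v mod p = v" using assms by simp
  thus ?thesis using assms by (simp add: zmod_zminus1_eq_if)
qed

lemma modp_helper:
  fixes p u v xx yy :: int
  shows "(u * (xx mod p) - v * (yy mod (2 * p))) mod p = (u * xx - v * yy) mod p"
proof -
  have e1: "xx mod p = xx - xx div p * p" by (simp add: minus_div_mult_eq_mod)
  have e2: "yy mod (2 * p) = yy - yy div (2 * p) * (2 * p)" by (simp add: minus_div_mult_eq_mod)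
  have "u * (xx mod p) - v * (yy mod (2 * p)) = (u * xx - v * yy) + (2 * v * (yy div (2 * p)) - u * (xx div p)) * p"
    unfolding e1 e2 by (simp add: algebra_simps)
  thus ?thesis by simp
qed


abbreviation "G2 p \<equiv> integer_mod_group (2 * p) \<times>\<times> integer_mod_group p"

lemma G2_carrier: "p > 0 \<Longrightarrow> x \<in> carrier (G2 p) \<longleftrightarrow> 0 \<le> fst x \<and> fst x < 2 * int p \<and> 0 \<le> snd x \<and> snd x < int p"
  by (cases x) (simp add: carrier_integer_mod_group)

lemma G2_mult: "x \<otimes>\<^bsub>G2 p\<^esub> y = ((fst x + fst y) mod (2 * int p), (snd x + snd y) mod int p)"
  by (simp add: mult_DirProd')

lemma G2_pow: "x [^]\<^bsub>G2 p\<^esub> (n::nat) = ((int n * fst x) mod (2 * int p), (int n * snd x) mod int p)"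
  by (simp add: pow_DirProd)

lemma homm_G2: "homm (G2 p) (\<lambda>x. fst x mod 2) 2"
  unfolding homm_def by (simp add: G2_mult mod_mod_cancel mod_simps)

lemma G2_ord:
  assumes "Factorial_Ring.prime p" "group (G2 p)" "x \<in> carrier (G2 p)" "group.ord (G2 p) x \<ge> 2"
  shows "even (fst x) \<Longrightarrow> group.ord (G2 p) x = p"
    and "odd (fst x) \<Longrightarrow> group.ord (G2 p) x = 2 \<or> group.ord (G2 p) x = 2 * p"
proof -
  have p0: "p > 0" using assms(1) prime_gt_0_nat by blast
  show "even (fst x) \<Longrightarrow> group.ord (G2 p) x = p"
  proof -
    assume e: "even (fst x)"
    then obtain a where a: "fst x = 2 * a" by blast
    have "x [^]\<^bsub>G2 p\<^esub> p = \<one>\<^bsub>G2 p\<^esub>" unfolding G2_pow using a by simp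
    hence "group.ord (G2 p) x dvd p" using ord_dvd_iff[OF assms(2,3)] by simp
    thus ?thesis using dvd_prime_cases[OF assms(1) _ assms(4)] by simp
  qed
  show "odd (fst x) \<Longrightarrow> group.ord (G2 p) x = 2 \<or> group.ord (G2 p) x = 2 * p"
  proof -
    assume s: "odd (fst x)"
    have "x [^]\<^bsub>G2 p\<^esub> (2 * p) = \<one>\<^bsub>G2 p\<^esub>" unfolding G2_pow by simp
    hence "group.ord (G2 p) x dvd 2 * p" using ord_dvd_iff[OF assms(2,3)] by simp
    moreover have "(int (group.ord (G2 p) x) * (fst x mod 2)) mod 2 = 0"
      using homm_ord[OF assms(2) homm_G2 assms(3)] by simp
    hence "even (int (group.ord (G2 p) x))" using s by (simp add: even_iff_mod_2_eq_zero odd_iff_mod_2_eq_one)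
    hence "even (group.ord (G2 p) x)" by simp
    ultimately show ?thesis using dvd_2p_even[OF assms(1)] by blast
  qed
qed

lemma G2_det_contra:
  assumes pr: "Factorial_Ring.prime p" and p3: "p \<ge> 3" and grp: "group (G2 p)"
    and tr: "triple (G2 p) g y1 y2 y3"
    and o1: "group.ord (G2 p) y1 = 2" and o3: "group.ord (G2 p) y3 = p" and e3: "even (fst y3)"
  shows False
proof -
  have p0: "p > 0" using p3 by simp
  have "odd p" using prime_odd_nat[OF pr] p3 by simp
  hence oddp: "odd (int p)" by simp
  have ys: "y1 \<in> carrier (G2 p)" "y2 \<in> carrier (G2 p)" "y3 \<in> carrier (G2 p)" using triple_carrier[OF tr] by auto
  obtain u v where y3: "y3 = (u, v)" by (cases y3)
  obtain a b where y1: "y1 = (a, b)" by (cases y1)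
  have r3: "0 \<le> u" "u < 2 * int p" "0 \<le> v" "v < int p" using ys(3) p0 by (auto simp: carrier_integer_mod_group y3)
  have r1: "0 \<le> a" "a < 2 * int p" "0 \<le> b" "b < int p" using ys(1) p0 by (auto simp: carrier_integer_mod_group y1)
  define D where "D = (\<lambda>w::int \<times> int. u * snd w - v * fst w)"
  have eq: "D (x \<otimes>\<^bsub>G2 p\<^esub> y) mod int p = (D x + D y) mod int p" for x y
  proof -
    have "D (x \<otimes>\<^bsub>G2 p\<^esub> y) = u * ((snd x + snd y) mod int p) - v * ((fst x + fst y) mod (2 * int p))"
      by (simp add: G2_mult D_def)
    hence "D (x \<otimes>\<^bsub>G2 p\<^esub> y) mod int p = (u * (snd x + snd y) - v * (fst x + fst y)) mod int p"
      using modp_helper[of u "snd x + snd y" "int p" v "fst x + fst y"] by simp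
    also have "u * (snd x + snd y) - v * (fst x + fst y) = D x + D y" by (simp add: D_def algebra_simps)
    finally show ?thesis .
  qed
  have hD: "homm (G2 p) D (int p)" unfolding homm_def using eq by blast
  have "y1 [^]\<^bsub>G2 p\<^esub> (2::nat) = \<one>\<^bsub>G2 p\<^esub>" using ord_dvd_iff[OF grp ys(1), of "2::nat"] o1 by simp
  hence m: "(2 * a) mod (2 * int p) = 0" "(2 * b) mod int p = 0" unfolding G2_pow by (simp_all add: y1)
  have b0: "b = 0" using two_b_mod[OF r1(3,4) m(2) oddp] .
  have a0: "a = 0 \<or> a = int p" using two_a_mod[OF r1(1,2) m(1)] .
  have D1: "D y1 mod int p = 0" using a0 b0 by (auto simp: D_def y1)
  have D3: "D y3 mod int p = 0" by (simp add: D_def y3)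
  have "(D y1 + D y2 + D y3) mod int p = 0" using triple_hom[OF tr hD] .
  hence D2: "D y2 mod int p = 0" using D1 D3 by (metis add.right_neutral mod_add_eq mod_mod_trivial add.commute mod_0)
  have all: "\<And>w. w \<in> carrier (G2 p) \<Longrightarrow> D w mod int p = 0"
    using triple_gen_kernel[OF grp tr hD D1 D2 D3] by blast
  have y3ne: "y3 \<noteq> (0, 0)"
  proof
    assume "y3 = (0, 0)"
    hence "group.ord (G2 p) y3 = 1" using group.ord_eq_1[OF grp ys(3)] by simp
    thus False using o3 p3 by simp
  qed
  show False
  proof (cases "u mod int p = 0")
    case False
    have "(0, 1) \<in> carrier (G2 p)" using p0 p3 by (simp add: carrier_integer_mod_group)
    hence "D (0, 1) mod int p = 0" by (rule all)
    thus False using False by (simp add: D_def)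
  next
    case True
    have "u = 0 \<or> u = int p" using u_mod[OF r3(1,2) True] .
    moreover have "even u" using e3 y3 by simp
    ultimately have u0: "u = 0" using oddp by auto
    hence v0: "0 < v" using y3ne r3 y3 by auto
    have "(1, 0) \<in> carrier (G2 p)" using p0 p3 by (simp add: carrier_integer_mod_group)
    hence "D (1, 0) mod int p = 0" by (rule all)
    thus False using neg_mod_nz[OF v0 r3(4)] by (simp add: D_def u0)
  qed
qed

lemma part2:
  assumes "Factorial_Ring.prime p" "p \<ge> 3" "g \<ge> 2" "acts_triangularly (G2 p) g M"
  shows "M = {#2 * p, 2 * p, p#}"
proof -
  have p0: "p > 0" using assms(2) by simp
  have A: "group (G2 p) \<and> (\<exists>x1 x2 x3. triple (G2 p) g x1 x2 x3 \<and> M = {#group.ord (G2 p) x1, group.ord (G2 p) x2, group.ord (G2 p) x3#})"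
    by (rule acts_triple[OF assms(4)])
  have grp: "group (G2 p)" using A by (rule conjunct1)
  obtain x1 x2 x3 where tr: "triple (G2 p) g x1 x2 x3"
    and M: "M = {#group.ord (G2 p) x1, group.ord (G2 p) x2, group.ord (G2 p) x3#}" using A by (elim conjE exE)
  have vals: "\<forall>x\<in>carrier (G2 p). fst x mod 2 = 0 \<or> fst x mod 2 = 1" by auto
  have w: "(1, 0) \<in> carrier (G2 p)" "fst ((1::int), (0::int)) mod 2 = 1" using p0 by (auto simp: carrier_integer_mod_group)
  obtain y1 y2 y3 where tr2: "triple (G2 p) g y1 y2 y3" and f: "fst y1 mod 2 = 1" "fst y2 mod 2 = 1" "fst y3 mod 2 = 0"
    and M2: "{#group.ord (G2 p) y1, group.ord (G2 p) y2, group.ord (G2 p) y3#} = {#group.ord (G2 p) x1, group.ord (G2 p) x2, group.ord (G2 p) x3#}"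
    using parity_wlog[OF grp homm_G2 vals w tr] by (elim conjE exE)
  have ys: "y1 \<in> carrier (G2 p)" "y2 \<in> carrier (G2 p)" "y3 \<in> carrier (G2 p)" using triple_carrier[OF tr2] by auto
  have os: "group.ord (G2 p) y1 \<ge> 2" "group.ord (G2 p) y2 \<ge> 2" "group.ord (G2 p) y3 \<ge> 2" using triple_ord[OF tr2] by auto
  have e3: "even (fst y3)" using f(3) by presburger
  have o3: "group.ord (G2 p) y3 = p" using G2_ord(1)[OF assms(1) grp ys(3) os(3) e3] .
  have o1: "group.ord (G2 p) y1 = 2 \<or> group.ord (G2 p) y1 = 2 * p" using G2_ord(2)[OF assms(1) grp ys(1) os(1)] f(1) by presburger
  have o2: "group.ord (G2 p) y2 = 2 \<or> group.ord (G2 p) y2 = 2 * p" using G2_ord(2)[OF assms(1) grp ys(2) os(2)] f(2) by presburger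
  have n1: "group.ord (G2 p) y1 \<noteq> 2"
  proof
    assume "group.ord (G2 p) y1 = 2"
    thus False using G2_det_contra[OF assms(1,2) grp tr2 _ o3 e3] by blast
  qed
  have n2: "group.ord (G2 p) y2 \<noteq> 2"
  proof
    assume "group.ord (G2 p) y2 = 2"
    thus False using G2_det_contra[OF assms(1,2) grp triple_swap12[OF tr2] _ o3 e3] by blast
  qed
  have MM: "M = {#group.ord (G2 p) y1, group.ord (G2 p) y2, group.ord (G2 p) y3#}" using M M2 by simp
  show ?thesis using o1 o2 n1 n2 unfolding MM o3 by simp
qed


abbreviation "G4 p \<equiv> integer_mod_group (2 * p ^ 2)"

lemma G4_carrier: "p > 0 \<Longrightarrow> x \<in> carrier (G4 p) \<longleftrightarrow> 0 \<le> x \<and> x < 2 * int p ^ 2"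
  by (simp add: carrier_integer_mod_group)

lemma homm_G4_2: "homm (G4 p) (\<lambda>x. x mod 2) 2"
  unfolding homm_def by (simp add: mod_mod_cancel mod_simps)

lemma homm_G4_p: "homm (G4 p) (\<lambda>x. x) (int p)"
  unfolding homm_def by (simp add: mod_mod_cancel mod_simps)

lemma G4_ord_dvd:
  assumes "group (G4 p)" "x \<in> carrier (G4 p)"
  shows "group.ord (G4 p) x dvd n \<longleftrightarrow> (int n * x) mod (2 * int p ^ 2) = 0"
  using ord_dvd_iff[OF assms, of n] by simp

lemma G4_ord:
  assumes pr: "Factorial_Ring.prime p" and p3: "p \<ge> 3" and grp: "group (G4 p)"
    and xc: "x \<in> carrier (G4 p)" and o2: "group.ord (G4 p) x \<ge> 2"
  shows "even x \<Longrightarrow> int p dvd x \<Longrightarrow> group.ord (G4 p) x = p"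
    and "even x \<Longrightarrow> \<not> int p dvd x \<Longrightarrow> group.ord (G4 p) x = p ^ 2"
    and "odd x \<Longrightarrow> \<not> int p dvd x \<Longrightarrow> group.ord (G4 p) x = 2 * p ^ 2"
    and "odd x \<Longrightarrow> int p dvd x \<Longrightarrow> group.ord (G4 p) x = 2 \<or> group.ord (G4 p) x = 2 * p"
proof -
  let ?o = "group.ord (G4 p) x"
  have hN: "?o dvd 2 * p ^ 2" using G4_ord_dvd[OF grp xc, of "2 * p ^ 2"] by simp
  have hE: "?o dvd p ^ 2" if ev: "even x"
  proof -
    obtain a where a: "x = 2 * a" using ev by (rule evenE)
    have "int (p ^ 2) * x = (2 * int p ^ 2) * a" by (simp add: a)
    thus ?thesis using G4_ord_dvd[OF grp xc, of "p ^ 2"] ev by (simp add: even_iff_mod_2_eq_zero)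
  qed
  have hP: "?o dvd 2 * p" if dv: "int p dvd x"
  proof -
    obtain a where a: "x = int p * a" using dv by (rule dvdE)
    have "int (2 * p) * x = (2 * int p ^ 2) * a" by (simp add: a power2_eq_square)
    thus ?thesis using G4_ord_dvd[OF grp xc, of "2 * p"] by simp
  qed
  have hO: "even ?o" if "odd x"
  proof -
    have "(int ?o * (x mod 2)) mod 2 = 0" using homm_ord[OF grp homm_G4_2 xc] by simp
    hence "even (int ?o)" using that by (simp add: even_iff_mod_2_eq_zero odd_iff_mod_2_eq_one)
    thus ?thesis by simp
  qed
  have hQ: "p ^ 2 dvd ?o" if "\<not> int p dvd x"
  proof -
    have "(int ?o * x) mod (2 * int p ^ 2) = 0" using G4_ord_dvd[OF grp xc, of ?o] by simp
    hence "2 * int p ^ 2 dvd int ?o * x" by presburger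
    hence "int p ^ 2 dvd int ?o * x" using dvd_mult_right by blast
    moreover have "coprime (int p ^ 2) x"
      using prime_imp_coprime[of "int p" x] pr that by simp
    ultimately have "int p ^ 2 dvd int ?o" using coprime_dvd_mult_left_iff by blast
    thus ?thesis by (metis of_nat_dvd_iff of_nat_power)
  qed
  have p2: "\<not> p ^ 2 dvd 2 * p"
  proof
    assume "p ^ 2 dvd 2 * p"
    hence "p * p dvd 2 * p" by (simp add: power2_eq_square)
    hence "p dvd 2" using p3 by simp
    thus False using p3 by (auto dest: dvd_imp_le)
  qed
  show "even x \<Longrightarrow> int p dvd x \<Longrightarrow> ?o = p"
  proof -
    assume e: "even x" and d: "int p dvd x"
    obtain i where i: "i \<le> 2" "?o = p ^ i" using hE[OF e] divides_primepow_nat[OF pr] by blast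
    have "i \<noteq> 0" proof assume "i = 0" thus False using i o2 by simp qed
    moreover have "i \<noteq> 2" using i hP[OF d] p2 by auto
    ultimately have "i = 1" using i by auto
    thus ?thesis using i by simp
  qed
  show "even x \<Longrightarrow> \<not> int p dvd x \<Longrightarrow> ?o = p ^ 2"
    using hE hQ by (simp add: dvd_antisym)
  show "odd x \<Longrightarrow> \<not> int p dvd x \<Longrightarrow> ?o = 2 * p ^ 2"
  proof -
    assume e: "odd x" and d: "\<not> int p dvd x"
    have "coprime 2 (p ^ 2)" using prime_odd_nat[OF pr] p3 by simp
    hence "2 * p ^ 2 dvd ?o" using divides_mult hO[OF e] hQ[OF d] by blast
    thus ?thesis using hN by (simp add: dvd_antisym)
  qed
  show "odd x \<Longrightarrow> int p dvd x \<Longrightarrow> ?o = 2 \<or> ?o = 2 * p"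
    using hP hO dvd_2p_even[OF pr] by blast
qed

lemma part4:
  assumes pr: "Factorial_Ring.prime p" and p3: "p \<ge> 3" and "g \<ge> 2" and act: "acts_triangularly (G4 p) g M"
  shows "M = {#2, p ^ 2, 2 * p ^ 2#} \<or> M = {#2 * p ^ 2, 2 * p ^ 2, p#}
                \<or> M = {#2 * p ^ 2, 2 * p ^ 2, p ^ 2#} \<or> M = {#2 * p, p ^ 2, 2 * p ^ 2#}"
proof -
  have p0: "p > 0" using p3 by simp
  have A: "group (G4 p) \<and> (\<exists>x1 x2 x3. triple (G4 p) g x1 x2 x3 \<and> M = {#group.ord (G4 p) x1, group.ord (G4 p) x2, group.ord (G4 p) x3#})"
    by (rule acts_triple[OF act])
  have grp: "group (G4 p)" using A by (rule conjunct1)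
  obtain x1 x2 x3 where tr: "triple (G4 p) g x1 x2 x3"
    and M: "M = {#group.ord (G4 p) x1, group.ord (G4 p) x2, group.ord (G4 p) x3#}" using A by (elim conjE exE)
  have vals: "\<forall>x\<in>carrier (G4 p). x mod 2 = 0 \<or> x mod 2 = 1" by auto
  have w: "1 \<in> carrier (G4 p)" "(1::int) mod 2 = 1" using p0 p3 by (auto simp: G4_carrier)
  obtain y1 y2 y3 where tr2: "triple (G4 p) g y1 y2 y3" and f: "y1 mod 2 = 1" "y2 mod 2 = 1" "y3 mod 2 = 0"
    and M2: "{#group.ord (G4 p) y1, group.ord (G4 p) y2, group.ord (G4 p) y3#} = {#group.ord (G4 p) x1, group.ord (G4 p) x2, group.ord (G4 p) x3#}"
    using parity_wlog[OF grp homm_G4_2 vals w tr] by (elim conjE exE)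
  have ys: "y1 \<in> carrier (G4 p)" "y2 \<in> carrier (G4 p)" "y3 \<in> carrier (G4 p)" using triple_carrier[OF tr2] by auto
  have os: "group.ord (G4 p) y1 \<ge> 2" "group.ord (G4 p) y2 \<ge> 2" "group.ord (G4 p) y3 \<ge> 2" using triple_ord[OF tr2] by auto
  have e1: "odd y1" "odd y2" "even y3" using f by presburger+
  have sump: "(y1 + y2 + y3) mod int p = 0" using triple_hom[OF tr2 homm_G4_p] .
  have p1: "\<not> int p dvd 1" using p3 by simp
  have notall: "\<not> (int p dvd y1 \<and> int p dvd y2 \<and> int p dvd y3)"
  proof
    assume "int p dvd y1 \<and> int p dvd y2 \<and> int p dvd y3"
    hence "(\<lambda>x. x) 1 mod int p = 0"
      using triple_gen_kernel[OF grp tr2 homm_G4_p _ _ _ w(1)] by simp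
    thus False using p1 by (simp add: dvd_eq_mod_eq_0)
  qed
  have two: "\<not> (int p dvd yi \<and> int p dvd yj)" if "{yi, yj, yk} = {y1, y2, y3}" "(yi + yj + yk) mod int p = 0"
    for yi yj yk
  proof
    assume h: "int p dvd yi \<and> int p dvd yj"
    have "int p dvd yi + yj + yk" using that(2) by (simp add: dvd_eq_mod_eq_0)
    moreover have "int p dvd yi + yj" using h by simp
    ultimately have "int p dvd yk" using dvd_add_right_iff by blast
    thus False using h that(1) notall by auto
  qed
  have n12: "\<not> (int p dvd y1 \<and> int p dvd y2)" using two[of y1 y2 y3] sump by simp
  have n13: "\<not> (int p dvd y1 \<and> int p dvd y3)" using two[of y1 y3 y2] sump by (simp add: insert_commute algebra_simps)
  have n23: "\<not> (int p dvd y2 \<and> int p dvd y3)" using two[of y2 y3 y1] sump by (simp add: insert_commute algebra_simps)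
  have MM: "M = {#group.ord (G4 p) y1, group.ord (G4 p) y2, group.ord (G4 p) y3#}" using M M2 by simp
  note O1 = G4_ord[OF pr p3 grp ys(1) os(1)]
  note O2 = G4_ord[OF pr p3 grp ys(2) os(2)]
  note O3 = G4_ord[OF pr p3 grp ys(3) os(3)]
  show ?thesis
  proof (cases "int p dvd y3")
    case True
    have "group.ord (G4 p) y1 = 2 * p ^ 2" using O1(3) e1 n13 True by blast
    moreover have "group.ord (G4 p) y2 = 2 * p ^ 2" using O2(3) e1 n23 True by blast
    moreover have "group.ord (G4 p) y3 = p" using O3(1) e1 True by blast
    ultimately show ?thesis unfolding MM by simp
  next
    case False
    have o3: "group.ord (G4 p) y3 = p ^ 2" using O3(2) e1 False by blast
    show ?thesis
    proof (cases "int p dvd y1")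
      case True
      have "group.ord (G4 p) y2 = 2 * p ^ 2" using O2(3) e1 n12 True by blast
      moreover have "group.ord (G4 p) y1 = 2 \<or> group.ord (G4 p) y1 = 2 * p" using O1(4) e1 True by blast
      ultimately show ?thesis unfolding MM o3 by (elim disjE) (simp_all add: add_mset_commute)
    next
      case F1: False
      have o1: "group.ord (G4 p) y1 = 2 * p ^ 2" using O1(3) e1 F1 by blast
      show ?thesis
      proof (cases "int p dvd y2")
        case True
        have "group.ord (G4 p) y2 = 2 \<or> group.ord (G4 p) y2 = 2 * p" using O2(4) e1 True by blast
        thus ?thesis unfolding MM o3 o1 by (elim disjE) (simp_all add: add_mset_commute)
      next
        case False
        have "group.ord (G4 p) y2 = 2 * p ^ 2" using O2(3) e1 False by blast
        thus ?thesis unfolding MM o3 o1 by (simp add: add_mset_commute)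
      qed
    qed
  qed
qed


theorem lemma1:
  fixes p g :: nat
  assumes "Factorial_Ring.prime p" and "p \<ge> 3" and "g \<ge> 2"
  shows "(\<not> (\<exists>M. acts_triangularly (dihedral_group (p ^ 2)) g M))
       \<and> (\<not> (\<exists>M. acts_triangularly (Zp2_semidir_Z2 p) g M))
       \<and> (\<forall>M. acts_triangularly (integer_mod_group (2 * p) \<times>\<times> integer_mod_group p) g M
              \<longrightarrow> M = {#2 * p, 2 * p, p#})
       \<and> (\<forall>M. acts_triangularly (dihedral_group p \<times>\<times> integer_mod_group p) g M
              \<longrightarrow> M = {#2 * p, 2 * p, p#} \<or> M = {#2, p, 2 * p#})
       \<and> (\<forall>M. acts_triangularly (integer_mod_group (2 * p ^ 2)) g M
              \<longrightarrow> M = {#2, p ^ 2, 2 * p ^ 2#} \<or> M = {#2 * p ^ 2, 2 * p ^ 2, p#}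
                \<or> M = {#2 * p ^ 2, 2 * p ^ 2, p ^ 2#} \<or> M = {#2 * p, p ^ 2, 2 * p ^ 2#})"
proof (intro conjI allI impI)
  have p0: "p > 0" using assms(2) by simp
  show "\<not> (\<exists>M. acts_triangularly (dihedral_group (p ^ 2)) g M)"
    using part1a[of "p ^ 2" g] p0 assms(3) by simp
  show "\<not> (\<exists>M. acts_triangularly (Zp2_semidir_Z2 p) g M)"
    using part1b[of p g] p0 assms(3) by simp
  fix M
  show "acts_triangularly (integer_mod_group (2 * p) \<times>\<times> integer_mod_group p) g M \<Longrightarrow> M = {#2 * p, 2 * p, p#}"
    using part2[OF assms] by blast
next
  fix M
  show "acts_triangularly (dihedral_group p \<times>\<times> integer_mod_group p) g M \<Longrightarrow> M = {#2 * p, 2 * p, p#} \<or> M = {#2, p, 2 * p#}"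
    using part3[OF assms] by blast
next
  fix M
  show "acts_triangularly (integer_mod_group (2 * p ^ 2)) g M \<Longrightarrow> M = {#2, p ^ 2, 2 * p ^ 2#} \<or> M = {#2 * p ^ 2, 2 * p ^ 2, p#}
                \<or> M = {#2 * p ^ 2, 2 * p ^ 2, p ^ 2#} \<or> M = {#2 * p, p ^ 2, 2 * p ^ 2#}"
    using part4[OF assms] by blast
qed

end
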